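(* Fix $\theta\in(0,1)$ such that the set $\{x\ge 0: \frac{x^s+(b-1)^\theta}{b^\theta}\le x\}$ is nonempty, and set $$x_\theta:=\max\left\{x\ge 0:\ \frac{x^s+(b-1)^\theta}{b^\theta}\le x\right\}.$$ If $\mathbb E\left[\exp\left(\theta(\beta\omega_1-\log M(\beta)+h)\right)\right]\le 1$ and there exists $n$ such that $\mathbb E[R_n^\theta]\le x_\theta$, then $\textsc{f}(\beta,h)=0$.
   Context: Fix an integer $s\ge 2$ and a real $b>1$. Let $\omega_1$ be a real random variable (law $\mathbb P$, expectation $\mathbb E$) with $\mathbb E[\omega_1]=0$, $\mathbb E[\omega_1^2]=1$ and $M(\beta):=\mathbb E[e^{\beta\omega_1}]<\infty$ for every $\beta>0$. For $\beta>0$, $h\in\mathbb R$, let $A$ denote a random variable with the law of $\exp(\beta\omega_1-\log M(\beta)+h)$. Define random variables $R_n=R_n(\beta,h)$ (in law) recursively by $R_0:=1$ and $$R_{n+1}=\frac{\prod_{j=1}^{s}R_n^{(j)}\prod_{j=1}^{s-1}A_j+b-1}{b},$$ where $R_n^{(1)},\dots,R_n^{(s)},A_1,\dots,A_{s-1}$ are independent, each $R_n^{(j)}$ has the law of $R_n$ and each $A_j$ has the law of $A$. The free energy is $\textsc{f}(\beta,h):=\lim_{n\to\infty}s^{-n}\mathbb E\log R_n$ (this limit exists). *)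

theory Defs
  imports "HOL-Probability.Probability"
begin

text \<open>Law of omega_1 is a probability measure mu on the reals.
  M(beta) = E[exp(beta omega_1)].\<close>
definition mgf :: "real measure \<Rightarrow> real \<Rightarrow> real" where
  "mgf \<mu> \<beta> = (\<integral>w. exp (\<beta> * w) \<partial>\<mu>)"

definition A_law :: "real measure \<Rightarrow> real \<Rightarrow> real \<Rightarrow> real measure" where
  "A_law \<mu> \<beta> h = distr \<mu> borel (\<lambda>w. exp (\<beta> * w - ln (mgf \<mu> \<beta>) + h))"

text \<open>Law of R_n. Coordinates j < s are i.i.d. copies of R_n,
  coordinates s <= j < 2s-1 are i.i.d. copies of A, all independent.\<close>
fun R_law :: "real measure \<Rightarrow> nat \<Rightarrow> real \<Rightarrow> real \<Rightarrow> real \<Rightarrow> nat \<Rightarrow> real measure" where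
  "R_law \<mu> s b \<beta> h 0 = return borel 1"
| "R_law \<mu> s b \<beta> h (Suc n) =
     distr (PiM {..<2 * s - 1} (\<lambda>j. if j < s then R_law \<mu> s b \<beta> h n else A_law \<mu> \<beta> h)) borel
       (\<lambda>x. ((\<Prod>j<s. x j) * (\<Prod>j\<in>{s..<2 * s - 1}. x j) + b - 1) / b)"

text \<open>The sequence s^{-n} E[log R_n], whose limit is the free energy.\<close>
definition free_energy_seq :: "real measure \<Rightarrow> nat \<Rightarrow> real \<Rightarrow> real \<Rightarrow> real \<Rightarrow> nat \<Rightarrow> real" where
  "free_energy_seq \<mu> s b \<beta> h n = (\<integral>r. ln r \<partial>(R_law \<mu> s b \<beta> h n)) / real s ^ n"

definition x_theta :: "nat \<Rightarrow> real \<Rightarrow> real \<Rightarrow> real" where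
  "x_theta s b \<theta> = (GREATEST x. x \<ge> 0 \<and> (x ^ s + (b - 1) powr \<theta>) / b powr \<theta> \<le> x)"

end

theory Submission imports Defs begin
lemma t1: fixes t \<theta> :: real assumes "0 \<le> t" "t \<le> 1" "0 < \<theta>" "\<theta> \<le> 1"
  shows "t \<le> t powr \<theta>"
  by (metis assms(1,2,4) powr_mono' powr_one)

lemma powr_subadd:
  fixes a c \<theta> :: real
  assumes "0 \<le> a" "0 \<le> c" "0 < \<theta>" "\<theta> \<le> 1"
  shows "(a + c) powr \<theta> \<le> a powr \<theta> + c powr \<theta>"
proof (cases "a + c = 0")
  case True then show ?thesis using assms by simp
next
  case False
  then have pos: "a + c > 0" using assms by linarith
  have h1: "a / (a + c) \<le> (a / (a + c)) powr \<theta>"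
    using assms pos by (intro t1) (auto simp: divide_le_eq_1)
  have h2: "c / (a + c) \<le> (c / (a + c)) powr \<theta>"
    using assms pos by (intro t1) (auto simp: divide_le_eq_1)
  have "1 = a / (a + c) + c / (a + c)" using pos by (simp add: add_divide_distrib[symmetric])
  also have "\<dots> \<le> (a powr \<theta> + c powr \<theta>) / (a + c) powr \<theta>"
    using h1 h2 by (simp add: powr_divide add_divide_distrib)
  finally show ?thesis using pos by (simp add: field_simps)
qed

lemma step:
  fixes R A :: "real measure" and s::nat and b \<theta>::real
  assumes s: "s \<ge> 2" and b: "b > 1" and th: "0 < \<theta>" "\<theta> < 1"
   and PR: "prob_space R" "sets R = sets borel" "AE r in R. 0 \<le> r" "integrable R (\<lambda>r. r powr \<theta>)"
   and PA: "prob_space A" "sets A = sets borel" "AE r in A. 0 \<le> r" "integrable A (\<lambda>r. r powr \<theta>)"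
  defines "M \<equiv> (\<lambda>j. if j < s then R else A)"
    and "g \<equiv> (\<lambda>x. ((\<Prod>j<s. x j) * (\<Prod>j\<in>{s..<2 * s-1}. x j) + b - 1) / b)"
    and "I \<equiv> {..<2 * s-1}"
  shows "prob_space (distr (PiM I M) borel g)"
    and "sets (distr (PiM I M) borel g) = sets borel"
    and "AE r in distr (PiM I M) borel g. (b-1)/b \<le> r"
    and "integrable (distr (PiM I M) borel g) (\<lambda>r. r powr \<theta>)"
    and "(\<integral>r. r powr \<theta> \<partial>(distr (PiM I M) borel g)) \<le>
          ((\<integral>r. r powr \<theta> \<partial>R) ^ s * (\<integral>r. r powr \<theta> \<partial>A) ^ (s-1) + (b-1) powr \<theta>) / b powr \<theta>"
proof -
  have Mp: "\<And>j. prob_space (M j)" and Ms: "\<And>j. sets (M j) = sets borel"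
    and Mi: "\<And>j. integrable (M j) (\<lambda>r. r powr \<theta>)"
    using PR PA by (auto simp: M_def)
  have Mae: "\<And>j. AE r in M j. 0 \<le> r"
    unfolding M_def using PR(3) PA(3) by simp
  interpret P: product_prob_space M I
    by (intro product_prob_space.intro product_prob_space_axioms.intro product_sigma_finite.intro
        prob_space_imp_sigma_finite Mp)
  have finI: "finite I" by (simp add: I_def)
  have comp: "\<And>j. j \<in> I \<Longrightarrow> (\<lambda>x. x j) \<in> borel_measurable (PiM I M)"
    using measurable_component_singleton[of _ I M] measurable_cong_sets[OF refl Ms] by blast
  have sub1: "{..<s} \<subseteq> I" and sub2: "{s..<2 * s-1} \<subseteq> I" using s by (auto simp: I_def)
  have gm: "g \<in> borel_measurable (PiM I M)"
    unfolding g_def using comp sub1 sub2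
    by (intro borel_measurable_divide borel_measurable_add borel_measurable_diff borel_measurable_times
        borel_measurable_prod borel_measurable_const) auto
  show "prob_space (distr (PiM I M) borel g)"
    using gm by (intro prob_space.prob_space_distr) (auto intro: P.prob_space_axioms)
  show "sets (distr (PiM I M) borel g) = sets borel" by simp
  have AEpos: "AE x in PiM I M. \<forall>j\<in>I. 0 \<le> x j"
    using finI by (intro eventually_ball_finite ballI AE_PiM_component Mp Mae) auto
  have Idisj: "I = {..<s} \<union> {s..<2 * s-1}" "{..<s} \<inter> {s..<2 * s-1} = {}" using s by (auto simp: I_def)
  have pw: "(b-1)/b \<le> g x \<and> (g x) powr \<theta> \<le> ((\<Prod>j\<in>I. x j powr \<theta>) + (b-1) powr \<theta>) / b powr \<theta>"
    if x: "\<forall>j\<in>I. 0 \<le> x j" for x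
  proof -
    define P where "P = (\<Prod>j<s. x j) * (\<Prod>j\<in>{s..<2 * s-1}. x j)"
    have P0: "0 \<le> P" unfolding P_def using x sub1 sub2 by (intro mult_nonneg_nonneg prod_nonneg) auto
    have PI: "P = (\<Prod>j\<in>I. x j)" unfolding P_def Idisj(1) by (subst prod.union_disjoint) (use Idisj in auto)
    have gx: "g x = (P + (b - 1)) / b" unfolding g_def P_def by simp
    have "(b-1)/b \<le> g x" unfolding gx using P0 b by (simp add: divide_right_mono)
    moreover have "(g x) powr \<theta> = (P + (b-1)) powr \<theta> / b powr \<theta>" unfolding gx by (simp add: powr_divide)
    moreover have "(P + (b-1)) powr \<theta> \<le> P powr \<theta> + (b-1) powr \<theta>"
      using P0 b th by (intro powr_subadd) auto
    moreover have "P powr \<theta> = (\<Prod>j\<in>I. x j powr \<theta>)" unfolding PI by (simp add: prod_powr_distrib)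
    ultimately show ?thesis using b by (simp add: divide_right_mono)
  qed
  show "AE r in distr (PiM I M) borel g. (b-1)/b \<le> r"
    using gm AEpos pw by (subst AE_distr_iff) auto
  define F where "F = (\<lambda>x. ((\<Prod>j\<in>I. x j powr \<theta>) + (b-1) powr \<theta>) / b powr \<theta>)"
  have Fi: "integrable (PiM I M) F" unfolding F_def
  proof (intro integrable_divide Bochner_Integration.integrable_add)
    show "integrable (PiM I M) (\<lambda>x. \<Prod>j\<in>I. x j powr \<theta>)"
      using P.product_integrable_prod[of I "\<lambda>j r. r powr \<theta>"] finI Mi by simp
  qed simp
  have gi: "integrable (PiM I M) (\<lambda>x. (g x) powr \<theta>)"
  proof (rule Bochner_Integration.integrable_bound[OF Fi])
    show "(\<lambda>x. g x powr \<theta>) \<in> borel_measurable (PiM I M)" using gm by measurable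
    show "AE x in PiM I M. norm (g x powr \<theta>) \<le> norm (F x)"
      using AEpos by eventually_elim (use pw in \<open>auto simp: F_def prod_nonneg\<close>)
  qed
  show "integrable (distr (PiM I M) borel g) (\<lambda>r. r powr \<theta>)"
    using gm gi by (subst integrable_distr_eq) auto
  have "(\<integral>r. r powr \<theta> \<partial>(distr (PiM I M) borel g)) = (\<integral>x. (g x) powr \<theta> \<partial>PiM I M)"
    using gm by (subst integral_distr) auto
  also have "\<dots> \<le> (\<integral>x. F x \<partial>PiM I M)"
    using gi Fi AEpos by (intro integral_mono_AE) (auto elim!: eventually_mono simp: F_def pw)
  also have "\<dots> = ((\<Prod>j\<in>I. \<integral>r. r powr \<theta> \<partial>M j) + (b-1) powr \<theta>) / b powr \<theta>"
  proof -
    have i1: "integrable (PiM I M) (\<lambda>x. \<Prod>j\<in>I. x j powr \<theta>)"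
      using P.product_integrable_prod[of I "\<lambda>j r. r powr \<theta>"] finI Mi by simp
    have e1: "(\<integral>x. (\<Prod>j\<in>I. x j powr \<theta>) \<partial>PiM I M) = (\<Prod>j\<in>I. \<integral>r. r powr \<theta> \<partial>M j)"
      using P.product_integral_prod[of I "\<lambda>j r. r powr \<theta>"] finI Mi by simp
    show ?thesis unfolding F_def
      by (simp add: Bochner_Integration.integral_add[OF i1] e1 P.P.prob_space)
  qed
  also have "(\<Prod>j\<in>I. \<integral>r. r powr \<theta> \<partial>M j) = (\<integral>r. r powr \<theta> \<partial>R) ^ s * (\<integral>r. r powr \<theta> \<partial>A) ^ (s-1)"
  proof -
    have "(\<Prod>j\<in>I. \<integral>r. r powr \<theta> \<partial>M j) = (\<Prod>j<s. \<integral>r. r powr \<theta> \<partial>M j) * (\<Prod>j\<in>{s..<2 * s-1}. \<integral>r. r powr \<theta> \<partial>M j)"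
      unfolding Idisj(1) by (subst prod.union_disjoint) (use Idisj in auto)
    also have "(\<Prod>j<s. \<integral>r. r powr \<theta> \<partial>M j) = (\<Prod>j<s. \<integral>r. r powr \<theta> \<partial>R)"
      by (intro prod.cong) (auto simp: M_def)
    also have "(\<Prod>j\<in>{s..<2 * s-1}. \<integral>r. r powr \<theta> \<partial>M j) = (\<Prod>j\<in>{s..<2 * s-1}. \<integral>r. r powr \<theta> \<partial>A)"
      by (intro prod.cong) (auto simp: M_def)
    finally show ?thesis using s by simp
  qed
  finally show "(\<integral>r. r powr \<theta> \<partial>(distr (PiM I M) borel g)) \<le>
          ((\<integral>r. r powr \<theta> \<partial>R) ^ s * (\<integral>r. r powr \<theta> \<partial>A) ^ (s-1) + (b-1) powr \<theta>) / b powr \<theta>" .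
qed

lemma xtheta_prop:
  fixes s :: nat and b \<theta> :: real
  assumes s: "s \<ge> 2" and b: "b > 1" and th: "0 < \<theta>"
    and nonempty: "{x::real. x \<ge> 0 \<and> (x ^ s + (b - 1) powr \<theta>) / b powr \<theta> \<le> x} \<noteq> {}"
  shows "x_theta s b \<theta> \<ge> 0 \<and> (x_theta s b \<theta> ^ s + (b - 1) powr \<theta>) / b powr \<theta> \<le> x_theta s b \<theta>"
proof -
  define S where "S = {x::real. x \<ge> 0 \<and> (x ^ s + (b - 1) powr \<theta>) / b powr \<theta> \<le> x}"
  have bpos: "b powr \<theta> > 0" using b by auto
  have cl: "closed S" unfolding S_def using b
    by (intro closed_Collect_conj closed_Collect_le continuous_intros) auto
  have bd: "x \<le> max 1 (b powr \<theta>)" if "x \<in> S" for x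
  proof (cases "x \<le> 1")
    case False
    have x0: "x \<ge> 0" and le: "x ^ s + (b - 1) powr \<theta> \<le> b powr \<theta> * x"
      using that bpos unfolding S_def by (auto simp: divide_le_eq mult.commute)
    have "x ^ 2 \<le> x ^ s" using False s by (intro power_increasing) auto
    then have "x * x \<le> b powr \<theta> * x" using le powr_ge_zero[of "b-1" \<theta>] unfolding power2_eq_square by linarith
    then have "x \<le> b powr \<theta>" using False by simp
    then show ?thesis by simp
  qed simp
  have bdd: "bdd_above S" using bd by (intro bdd_aboveI) blast
  have ne: "S \<noteq> {}" using nonempty S_def by simp
  have inS: "Sup S \<in> S" by (rule closed_contains_Sup[OF ne bdd cl])
  have "x_theta s b \<theta> = Sup S"
    unfolding x_theta_def
  proof (rule Greatest_equality)
    show "0 \<le> Sup S \<and> (Sup S ^ s + (b - 1) powr \<theta>) / b powr \<theta> \<le> Sup S" using inS S_def by simp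
    show "\<And>y. 0 \<le> y \<and> (y ^ s + (b - 1) powr \<theta>) / b powr \<theta> \<le> y \<Longrightarrow> y \<le> Sup S"
      using bdd by (intro cSup_upper) (auto simp: S_def)
  qed
  then show ?thesis using inS S_def by simp
qed

lemma ln_le_powr: fixes r \<theta> :: real assumes "0 < r" "0 < \<theta>"
  shows "ln r \<le> (r powr \<theta> - 1) / \<theta>"
proof -
  have "\<theta> * ln r = ln (r powr \<theta>)" using assms by (simp add: ln_powr)
  also have "\<dots> \<le> r powr \<theta> - 1" using assms by (intro ln_le_minus_one) simp
  finally show ?thesis using assms by (simp add: field_simps)
qed

theorem lemma3p2:
  fixes \<mu> :: "real measure" and s :: nat and b \<beta> h \<theta> :: real
  assumes s: "s \<ge> 2" and b: "b > 1"
    and prob: "prob_space \<mu>" and sets: "sets \<mu> = sets borel"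
    and int1: "integrable \<mu> (\<lambda>w. w)" and mean: "(\<integral>w. w \<partial>\<mu>) = 0"
    and int2: "integrable \<mu> (\<lambda>w. w\<^sup>2)" and var: "(\<integral>w. w\<^sup>2 \<partial>\<mu>) = 1"
    and mgf_fin: "\<forall>t>0. integrable \<mu> (\<lambda>w. exp (t * w))"
    and \<beta>: "\<beta> > 0"
    and \<theta>: "0 < \<theta>" "\<theta> < 1"
    and nonempty: "{x::real. x \<ge> 0 \<and> (x ^ s + (b - 1) powr \<theta>) / b powr \<theta> \<le> x} \<noteq> {}"
    and Ath: "(\<integral>w. exp (\<theta> * (\<beta> * w - ln (mgf \<mu> \<beta>) + h)) \<partial>\<mu>) \<le> 1"
    and Rn: "\<exists>n. (\<integral>r. r powr \<theta> \<partial>(R_law \<mu> s b \<beta> h n)) \<le> x_theta s b \<theta>"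
  shows "free_energy_seq \<mu> s b \<beta> h \<longlonglongrightarrow> 0"
proof -
  define L where "L = ln (mgf \<mu> \<beta>)"
  define T where "T = (\<lambda>w. exp (\<beta> * w - L + h))"
  define Al where "Al = A_law \<mu> \<beta> h"
  have Al_eq: "Al = distr \<mu> borel T" unfolding Al_def A_law_def T_def L_def ..
  have Tm: "T \<in> measurable \<mu> borel"
    unfolding measurable_cong_sets[OF sets refl] T_def by measurable
  have Ap: "prob_space Al" unfolding Al_eq using Tm prob
    by (intro prob_space.prob_space_distr) auto
  have As: "sets Al = sets borel" unfolding Al_eq by simp
  have Aae: "AE r in Al. 0 \<le> r" unfolding Al_eq using Tm
    by (subst AE_distr_iff) (auto simp: T_def)
  have Tpow: "\<And>w. T w powr \<theta> = exp (\<theta> * (h - L)) * exp ((\<theta> * \<beta>) * w)"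
    by (simp add: T_def exp_powr_real flip: exp_add) (simp add: algebra_simps)
  have Tpow2: "\<And>w. T w powr \<theta> = exp (\<theta> * (\<beta> * w - ln (mgf \<mu> \<beta>) + h))"
    by (simp add: T_def exp_powr_real L_def mult.commute)
  have Ti: "integrable \<mu> (\<lambda>w. T w powr \<theta>)"
    unfolding Tpow using mgf_fin \<beta> \<theta> by (intro integrable_mult_right) auto
  have Ai: "integrable Al (\<lambda>r. r powr \<theta>)" unfolding Al_eq using Tm Ti
    by (subst integrable_distr_eq) auto
  have AI: "(\<integral>r. r powr \<theta> \<partial>Al) \<le> 1" unfolding Al_eq using Tm Ath
    by (subst integral_distr) (auto simp: Tpow2)
  have AI0: "(\<integral>r. r powr \<theta> \<partial>Al) \<ge> 0" by (intro integral_nonneg_AE) auto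
  define Rl where "Rl = R_law \<mu> s b \<beta> h"
  define c0 where "c0 = (b - 1) / b"
  have c0: "0 < c0" "c0 \<le> 1" using b by (auto simp: c0_def)
  have eq: "Rl (Suc n) = distr (PiM {..<2 * s - 1} (\<lambda>j. if j < s then Rl n else Al)) borel
      (\<lambda>x. ((\<Prod>j<s. x j) * (\<Prod>j\<in>{s..<2 * s - 1}. x j) + b - 1) / b)" for n
    unfolding Rl_def Al_def by simp
  have props: "prob_space (Rl n) \<and> sets (Rl n) = sets borel \<and> (AE r in Rl n. c0 \<le> r)
      \<and> integrable (Rl n) (\<lambda>r. r powr \<theta>)" for n
  proof (induction n)
    case 0
    have p: "prob_space (return borel (1::real))" by (simp add: prob_space_return)
    have "integrable (return borel (1::real)) (\<lambda>r. 1::real)"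
      using p unfolding prob_space_def by (simp add: finite_measure.integrable_const)
    then have "integrable (return borel (1::real)) (\<lambda>r. r powr \<theta>)"
      by (rule integrable_cong_AE_imp) (auto simp: AE_return)
    moreover have "AE r in return borel (1::real). c0 \<le> r" using c0 by (simp add: AE_return)
    ultimately show ?case using p unfolding Rl_def R_law.simps by simp
  next
    case (Suc n)
    have ae0: "AE r in Rl n. 0 \<le> r" using Suc c0 by (auto elim: eventually_mono)
    have h1: "prob_space (Rl n)" "sets (Rl n) = sets borel" "integrable (Rl n) (\<lambda>r. r powr \<theta>)"
      using Suc by auto
    note st = step[OF s b \<theta> h1(1,2) ae0 h1(3) Ap As Aae Ai]
    show ?case unfolding eq c0_def using st(1-4) by blast
  qed
  define y where "y n = (\<integral>r. r powr \<theta> \<partial>Rl n)" for n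
  have y0: "y n \<ge> 0" for n unfolding y_def by (intro integral_nonneg_AE) auto
  have yrec: "y (Suc n) \<le> (y n ^ s + (b-1) powr \<theta>) / b powr \<theta>" for n
  proof -
    have ae0: "AE r in Rl n. 0 \<le> r" using props[of n] c0 by (auto elim: eventually_mono)
    have "y (Suc n) \<le> (y n ^ s * (\<integral>r. r powr \<theta> \<partial>Al) ^ (s-1) + (b-1) powr \<theta>) / b powr \<theta>"
      using step(5)[OF s b \<theta> _ _ ae0 _ Ap As Aae Ai] props[of n]
      unfolding y_def eq by blast
    also have "\<dots> \<le> (y n ^ s + (b-1) powr \<theta>) / b powr \<theta>"
      using AI AI0 y0[of n] b
      by (intro divide_right_mono add_right_mono mult_left_le power_le_one) auto
    finally show ?thesis .
  qed
  define xt where "xt = x_theta s b \<theta>"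
  have xt: "xt \<ge> 0" "(xt ^ s + (b - 1) powr \<theta>) / b powr \<theta> \<le> xt"
    using xtheta_prop[OF s b \<theta>(1) nonempty] by (auto simp: xt_def)
  from Rn obtain N where N: "y N \<le> xt" by (auto simp: y_def Rl_def xt_def)
  have ybd: "y m \<le> xt" if "N \<le> m" for m
    using that
  proof (induction m rule: dec_induct)
    case base then show ?case using N .
  next
    case (step m)
    have "y (Suc m) \<le> (y m ^ s + (b-1) powr \<theta>) / b powr \<theta>" by (rule yrec)
    also have "\<dots> \<le> (xt ^ s + (b-1) powr \<theta>) / b powr \<theta>"
      using step.IH y0[of m] b by (intro divide_right_mono add_right_mono power_mono) auto
    finally show ?case using xt by simp
  qed
  define K where "K = \<bar>ln c0\<bar> + \<bar>(xt - 1) / \<theta>\<bar>"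
  have lnbd: "\<bar>\<integral>r. ln r \<partial>Rl m\<bar> \<le> K" if "N \<le> m" for m
  proof (cases "integrable (Rl m) ln")
    case False then show ?thesis by (simp add: not_integrable_integral_eq K_def)
  next
    case True
    interpret pm: prob_space "Rl m" using props[of m] by simp
    have ae: "AE r in Rl m. c0 \<le> r" using props[of m] by simp
    have "ln c0 = (\<integral>r. ln c0 \<partial>Rl m)" by (simp add: pm.prob_space)
    also have "\<dots> \<le> (\<integral>r. ln r \<partial>Rl m)"
      using True ae c0 by (intro integral_mono_AE) (auto elim!: eventually_mono)
    finally have lo: "ln c0 \<le> (\<integral>r. ln r \<partial>Rl m)" .
    have "(\<integral>r. ln r \<partial>Rl m) \<le> (\<integral>r. (r powr \<theta> - 1) / \<theta> \<partial>Rl m)"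
      using True ae c0 props[of m] \<theta>
      by (intro integral_mono_AE) (auto elim!: eventually_mono intro!: ln_le_powr)
    also have "\<dots> = (y m - 1) / \<theta>"
    proof -
      have Ri: "integrable (Rl m) (\<lambda>r. r powr \<theta>)" using props[of m] by blast
      have "(\<integral>r. (r powr \<theta> - 1) / \<theta> \<partial>Rl m) = (\<integral>r. r powr \<theta> - 1 \<partial>Rl m) / \<theta>"
        by (rule integral_divide_zero)
      also have "(\<integral>r. r powr \<theta> - 1 \<partial>Rl m) = y m - 1"
        unfolding y_def by (subst Bochner_Integration.integral_diff[OF Ri]) (auto simp: pm.prob_space)
      finally show ?thesis .
    qed
    also have "\<dots> \<le> (xt - 1) / \<theta>" using ybd[OF that] \<theta> by (simp add: divide_right_mono)
    finally have hi: "(\<integral>r. ln r \<partial>Rl m) \<le> (xt - 1) / \<theta>" .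
    show ?thesis using lo hi unfolding K_def by linarith
  qed
  have lim: "(\<lambda>n. K / real s ^ n) \<longlonglongrightarrow> 0" using s by (intro LIMSEQ_divide_realpow_zero) simp
  have ev: "eventually (\<lambda>n. norm (free_energy_seq \<mu> s b \<beta> h n) \<le> K / real s ^ n) sequentially"
    using eventually_ge_at_top[of N]
  proof eventually_elim
    case (elim n)
    have sp: "real s ^ n > 0" using s by simp
    have "norm (free_energy_seq \<mu> s b \<beta> h n) = \<bar>\<integral>r. ln r \<partial>Rl n\<bar> / real s ^ n"
      unfolding free_energy_seq_def Rl_def using sp by (simp add: abs_divide)
    also have "\<dots> \<le> K / real s ^ n" using lnbd[OF elim] sp by (intro divide_right_mono) auto
    finally show ?case .
  qed
  show ?thesis by (rule Lim_null_comparison[OF ev lim])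
qed
end
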